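(* Let $n$ be even. The expected runtime of the SD-(1+1) EA with parameter $R$, where $n+1\le R\le n^{O(1)}$, on $\mathrm{Trap}$ is $O(2.34^n\ln n)$.
   Context: $\mathrm{Trap}\colon\{0,1\}^n\to\mathbb{R}$ is defined by $\mathrm{Trap}(x)=\sum_{i=1}^n x_i$ for $x\neq 0^n$ and $\mathrm{Trap}(0^n)=n+1$. The SD-(1+1) EA with parameter $R\ge1$ maximizing $f\colon\{0,1\}^n\to\mathbb{R}$ ($n$ even) works as follows: choose $x$ uniformly at random from $\{0,1\}^n$, set strength $r\gets 1$ and counter $u\gets0$. In each iteration: create $y$ from $x$ by flipping each bit independently with probability $r/n$; set $u\gets u+1$. If $f(y)>f(x)$, set $x\gets y$, $r\gets1$, $u\gets0$. Otherwise, if $f(y)=f(x)$ and $r=1$, set $x\gets y$; and (in the case $f(y)\le f(x)$) if $u>2(en/r)^r\ln(nR)$, set $r\gets\min\{r+1,n/2\}$ and $u\gets 0$. The runtime is the number of iterations until a global maximum is first created. *)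

theory Defs
  imports "HOL-Probability.Probability"
begin

text \<open>Bit strings of length n are represented as functions nat => bool that are
  False outside {..<n}.\<close>

definition bitstrings :: "nat \<Rightarrow> (nat \<Rightarrow> bool) set" where
  "bitstrings n = {x. \<forall>i\<ge>n. \<not> x i}"

definition Trap :: "nat \<Rightarrow> (nat \<Rightarrow> bool) \<Rightarrow> real" where
  "Trap n x = (if (\<forall>i<n. \<not> x i) then real n + 1
               else real (card {i. i < n \<and> x i}))"

definition is_global_max :: "nat \<Rightarrow> ((nat \<Rightarrow> bool) \<Rightarrow> real) \<Rightarrow> (nat \<Rightarrow> bool) \<Rightarrow> bool" where
  "is_global_max n f y = (y \<in> bitstrings n \<and> (\<forall>z\<in>bitstrings n. f z \<le> f y))"

text \<open>State: (current search point x, strength r, counter u, flag whether a global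
  maximum has been created so far).\<close>
type_synonym sd_state = "(nat \<Rightarrow> bool) \<times> nat \<times> nat \<times> bool"

definition sd_threshold :: "nat \<Rightarrow> real \<Rightarrow> nat \<Rightarrow> real" where
  "sd_threshold n R r = 2 * (exp 1 * real n / real r) ^ r * ln (real n * R)"

definition mutation_mask :: "nat \<Rightarrow> nat \<Rightarrow> (nat \<Rightarrow> bool) pmf" where
  "mutation_mask n r = Pi_pmf {..<n} False (\<lambda>_. bernoulli_pmf (real r / real n))"

definition sd_step :: "((nat \<Rightarrow> bool) \<Rightarrow> real) \<Rightarrow> nat \<Rightarrow> real \<Rightarrow> sd_state \<Rightarrow> sd_state pmf" where
  "sd_step f n R s = (case s of (x, r, u, hit) \<Rightarrow>
     map_pmf (\<lambda>m.
       let y = (\<lambda>i. x i \<noteq> m i);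
           u' = u + 1;
           hit' = (hit \<or> is_global_max n f y)
       in if f y > f x then (y, 1, 0, hit')
          else (let x' = (if f y = f x \<and> r = 1 then y else x)
                in if real u' > sd_threshold n R r
                   then (x', min (r + 1) (n div 2), 0, hit')
                   else (x', r, u', hit')))
     (mutation_mask n r))"

definition sd_init :: "((nat \<Rightarrow> bool) \<Rightarrow> real) \<Rightarrow> nat \<Rightarrow> sd_state pmf" where
  "sd_init f n = map_pmf (\<lambda>x. (x, 1, 0, is_global_max n f x))
                   (Pi_pmf {..<n} False (\<lambda>_. bernoulli_pmf (1/2)))"

primrec sd_dist :: "((nat \<Rightarrow> bool) \<Rightarrow> real) \<Rightarrow> nat \<Rightarrow> real \<Rightarrow> nat \<Rightarrow> sd_state pmf" where
  "sd_dist f n R 0 = sd_init f n"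
| "sd_dist f n R (Suc t) = bind_pmf (sd_dist f n R t) (sd_step f n R)"

text \<open>Expected runtime T (number of iterations until a global maximum is first
  created), via E[T] = sum_{t>=0} Pr[T > t]; T > t iff no global maximum was
  created within the first t iterations (nor is the initial point optimal).\<close>
definition sd_expected_runtime :: "((nat \<Rightarrow> bool) \<Rightarrow> real) \<Rightarrow> nat \<Rightarrow> real \<Rightarrow> ennreal" where
  "sd_expected_runtime f n R =
     (\<Sum>t. ennreal (measure_pmf.prob (sd_dist f n R t) {s. \<not> snd (snd (snd s))}))"

end

theory Submission imports Defs "HOL-Analysis.Complex_Transcendental" "HOL-Real_Asymp.Real_Asymp"
begin

lemma pow_mono_step:
  fixes n r :: nat
  assumes "1 \<le> r" "r + 1 \<le> n"
  shows "(exp 1 * real n / real r) ^ r \<le> (exp 1 * real n / real (r+1)) ^ (r+1)"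
proof -
  have r0: "real r > 0" using assms by simp
  have "(1 + 1 / real r) ^ r \<le> exp (1 / real r) ^ r"
    by (intro power_mono) (auto simp: exp_ge_add_one_self add.commute)
  also have "\<dots> = exp 1" using r0 by (simp add: exp_of_nat_mult[symmetric])
  also have "\<dots> \<le> exp 1 * real n / real (r+1)"
  proof -
    have "real r + 1 \<le> real n" using assms by linarith
    then have "exp 1 * (real r + 1) \<le> exp 1 * real n" by simp
    then show ?thesis by (simp add: field_simps)
  qed
  finally have key: "((real r + 1) / real r) ^ r \<le> exp 1 * real n / real (r+1)"
    using r0 by (simp add: field_simps)
  have "(exp 1 * real n / real (r+1)) ^ (r+1) = (exp 1 * real n / real (r+1)) ^ r * (exp 1 * real n / real (r+1))"
    by simp
  also have "(exp 1 * real n / real (r+1)) ^ r = (exp 1 * real n / real r) ^ r / ((real r + 1) / real r) ^ r"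
    using r0 by (simp add: power_divide field_simps)
  finally have eq: "(exp 1 * real n / real (r+1)) ^ (r+1) = (exp 1 * real n / real r) ^ r / ((real r + 1) / real r) ^ r * (exp 1 * real n / real (r+1))" .
  have pos: "((real r + 1) / real r) ^ r > 0" using r0 by simp
  have "(exp 1 * real n / real r) ^ r = (exp 1 * real n / real r) ^ r / ((real r + 1) / real r) ^ r * ((real r + 1) / real r) ^ r"
    using pos by (metis nonzero_eq_divide_eq order_less_irrefl)
  also have "\<dots> \<le> (exp 1 * real n / real r) ^ r / ((real r + 1) / real r) ^ r * (exp 1 * real n / real (r+1))"
    by (intro mult_left_mono key) (use r0 in simp)
  finally show ?thesis using eq by simp
qed

lemma pow_mono_gen:
  fixes n r s :: nat
  assumes "1 \<le> r" "r \<le> s" "s \<le> n"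
  shows "(exp 1 * real n / real r) ^ r \<le> (exp 1 * real n / real s) ^ s"
proof -
  have "s \<le> n \<longrightarrow> (exp 1 * real n / real r) ^ r \<le> (exp 1 * real n / real s) ^ s"
    using assms(2)
  proof (induction s rule: dec_induct)
    case base then show ?case by simp
  next
    case (step m) then show ?case using pow_mono_step[of m n] assms(1)
      by (metis Suc_eq_plus1 Suc_leD order_trans le_trans)
  qed
  then show ?thesis using assms by simp
qed

lemma eventually_main: "eventually (\<lambda>n::nat. (real n + 1)^2 * 2.335 ^ n \<le> 2.34 ^ n) sequentially"
  by real_asymp

definition ones :: "nat \<Rightarrow> (nat \<Rightarrow> bool) \<Rightarrow> nat" where
  "ones n x = card {i. i < n \<and> x i}"

definition Mc :: "nat \<Rightarrow> real \<Rightarrow> nat" where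
  "Mc n R = nat \<lceil>2 * (2 * exp 1) ^ (n div 2) * ln (real n * R)\<rceil> + 1"

definition pot :: "nat \<Rightarrow> real \<Rightarrow> sd_state \<Rightarrow> nat" where
  "pot n R s = (case s of (x,r,u,hit) \<Rightarrow> if hit then 0 else
     (Mc n R + 1) * (n div 2 + 1) * (n - ones n x) + (Mc n R + 1) * (n div 2 - r)
      + (if r < n div 2 then Mc n R - u else 0) + 2^n)"

definition sinv :: "nat \<Rightarrow> sd_state \<Rightarrow> bool" where
  "sinv n s = (case s of (x,r,u,hit) \<Rightarrow> x \<in> bitstrings n \<and> 1 \<le> r \<and> r \<le> n div 2 \<and> (\<not>hit \<longrightarrow> (\<exists>i<n. x i)))"

definition outc :: "nat \<Rightarrow> real \<Rightarrow> (nat \<Rightarrow> bool) \<Rightarrow> nat \<Rightarrow> nat \<Rightarrow> bool \<Rightarrow> (nat \<Rightarrow> bool) \<Rightarrow> sd_state" where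
  "outc n R x r u hit m = (let f = Trap n; y = (\<lambda>i. x i \<noteq> m i);
           u' = u + 1;
           hit' = (hit \<or> is_global_max n f y)
       in if f y > f x then (y, 1, 0, hit')
          else (let x' = (if f y = f x \<and> r = 1 then y else x)
                in if real u' > sd_threshold n R r
                   then (x', min (r + 1) (n div 2), 0, hit')
                   else (x', r, u', hit')))"

lemma sd_step_eq: "sd_step (Trap n) n R (x,r,u,hit) = map_pmf (outc n R x r u hit) (mutation_mask n r)"
  unfolding sd_step_def by (simp, intro map_pmf_cong) (simp_all add: outc_def Let_def)

lemma ones_le: "ones n x \<le> n"
proof -
  have "card {i. i < n \<and> x i} \<le> card {..<n}" by (intro card_mono) auto
  then show ?thesis by (simp add: ones_def)
qed

lemma Trap_nz: "\<exists>i<n. x i \<Longrightarrow> Trap n x = real (ones n x)"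
  by (auto simp: Trap_def ones_def)

lemma zero_gm: "z \<in> bitstrings n \<Longrightarrow> \<forall>i<n. \<not> z i \<Longrightarrow> is_global_max n (Trap n) z"
  unfolding is_global_max_def
proof (intro conjI ballI)
  fix w assume "\<forall>i<n. \<not> z i"
  then show "Trap n w \<le> Trap n z" using ones_le[of n w] by (auto simp: Trap_def ones_def)
qed auto

lemma not_gm_nz: "z \<in> bitstrings n \<Longrightarrow> \<not> is_global_max n (Trap n) z \<Longrightarrow> \<exists>i<n. z i"
  using zero_gm by blast

lemma mask_bits: "m \<in> set_pmf (mutation_mask n r) \<Longrightarrow> m \<in> bitstrings n"
  using set_Pi_pmf_subset[of "{..<n}" False] by (fastforce simp: mutation_mask_def bitstrings_def)

lemma thr_lt_M:
  assumes "even n" "n \<ge> 2" "1 \<le> r" "r \<le> n div 2" "0 \<le> ln (real n * R)"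
  shows "sd_threshold n R r < real (Mc n R)"
proof -
  have h: "real n / real (n div 2) = 2" using assms(1,2) by (auto elim!: evenE)
  have "(exp 1 * real n / real r) ^ r \<le> (exp 1 * real n / real (n div 2)) ^ (n div 2)"
    by (rule pow_mono_gen) (use assms in auto)
  also have "exp 1 * real n / real (n div 2) = 2 * exp 1" using h by (metis mult.commute times_divide_eq_right)
  finally have "sd_threshold n R r \<le> 2 * (2 * exp 1) ^ (n div 2) * ln (real n * R)"
    unfolding sd_threshold_def using assms(5) by (intro mult_right_mono mult_left_mono) auto
  also have "\<dots> \<le> real (nat \<lceil>2 * (2 * exp 1) ^ (n div 2) * ln (real n * R)\<rceil>)"
    by linarith
  finally show ?thesis by (simp add: Mc_def)
qed

lemma outc_inv:
  assumes "even n" "n \<ge> 2" "sinv n (x,r,u,hit)" "m \<in> bitstrings n"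
  shows "sinv n (outc n R x r u hit m)"
proof -
  define y where "y = (\<lambda>i. x i \<noteq> m i)"
  have yb: "y \<in> bitstrings n" using assms(3,4) by (auto simp: y_def bitstrings_def sinv_def)
  have ynz: "\<not> is_global_max n (Trap n) y \<Longrightarrow> \<exists>i<n. y i" using not_gm_nz[OF yb] .
  have h1: "1 \<le> n div 2" using assms(2) by simp
  show ?thesis using assms(3) yb ynz h1
    unfolding outc_def Let_def y_def[symmetric]
    by (auto simp: sinv_def)
qed

lemma outc_hit: "outc n R x r u True m = (a,b,c,d) \<Longrightarrow> d"
  by (auto simp: outc_def Let_def split: if_splits)

lemma outc_pot:
  assumes "even n" "n \<ge> 2" "0 \<le> ln (real n * R)" "sinv n (x,r,u,False)" "m \<in> bitstrings n"
  shows "pot n R (outc n R x r u False m) \<le> pot n R (x,r,u,False) \<and>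
         (r < n div 2 \<longrightarrow> pot n R (outc n R x r u False m) < pot n R (x,r,u,False)) \<and>
         ((\<forall>i<n. m i = x i) \<longrightarrow> pot n R (outc n R x r u False m) = 0)"
proof -
  define y where "y = (\<lambda>i. x i \<noteq> m i)"
  define h where "h = n div 2"
  define M where "M = Mc n R"
  have xb: "x \<in> bitstrings n" and r1: "1 \<le> r" and rh: "r \<le> h" and xnz: "\<exists>i<n. x i"
    using assms(4) by (auto simp: sinv_def h_def)
  have yb: "y \<in> bitstrings n" using xb assms(5) by (auto simp: y_def bitstrings_def)
  have potx: "pot n R (x,r,u,False) = (M + 1) * (h + 1) * (n - ones n x) + (M + 1) * (h - r)
      + (if r < h then M - u else 0) + 2^n" by (simp add: pot_def h_def M_def)
  have Tx: "Trap n x = real (ones n x)" using Trap_nz[OF xnz] .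
  have thr: "sd_threshold n R r < real M" unfolding M_def
    by (rule thr_lt_M) (use assms r1 rh h_def in auto)
  show ?thesis
  proof (cases "is_global_max n (Trap n) y")
    case True
    then have "pot n R (outc n R x r u False m) = 0"
      unfolding outc_def Let_def y_def[symmetric] by (simp add: pot_def)
    moreover have "pot n R (x,r,u,False) > 0" unfolding potx by simp
    ultimately show ?thesis by simp
  next
    case False
    have ynz: "\<exists>i<n. y i" using not_gm_nz[OF yb False] .
    have Ty: "Trap n y = real (ones n y)" using Trap_nz[OF ynz] .
    have notzero: "\<not> (\<forall>i<n. m i = x i)" using ynz by (auto simp: y_def)
    show ?thesis
    proof (cases "Trap n y > Trap n x")
      case True
      then have o: "outc n R x r u False m = (y, 1, 0, False)"
        unfolding outc_def Let_def y_def[symmetric] using False by simp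
      have lt: "ones n x < ones n y" using True Tx Ty by simp
      have le: "ones n y \<le> n" by (rule ones_le)
      have a: "n - ones n y + 1 \<le> n - ones n x" using lt le by linarith
      have "pot n R (y,1,0,False) = (M + 1) * (h + 1) * (n - ones n y) + (M + 1) * (h - 1)
         + (if 1 < h then M else 0) + 2^n" by (simp add: pot_def h_def M_def)
      also have "\<dots> < (M + 1) * (h + 1) * (n - ones n y) + (M + 1) * (h + 1) + 2^n"
      proof -
        have "(M + 1) * (h - 1) + (if 1 < h then M else 0) < (M + 1) * (h + 1)"
          using rh r1 by (cases h) (auto simp: algebra_simps)
        then show ?thesis by simp
      qed
      also have "\<dots> = (M + 1) * (h + 1) * (n - ones n y + 1) + 2^n" by (simp add: algebra_simps)
      also have "\<dots> \<le> (M + 1) * (h + 1) * (n - ones n x) + 2^n"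
        by (intro add_right_mono mult_left_mono a) simp
      also have "\<dots> \<le> pot n R (x,r,u,False)" unfolding potx by simp
      finally show ?thesis using o notzero by auto
    next
      case nimp: False
      define x' where "x' = (if Trap n y = Trap n x \<and> r = 1 then y else x)"
      have ox': "ones n x' = ones n x" using Tx Ty by (auto simp: x'_def)
      show ?thesis
      proof (cases "real (u + 1) > sd_threshold n R r")
        case True
        then have o: "outc n R x r u False m = (x', min (r + 1) h, 0, False)"
          unfolding outc_def Let_def y_def[symmetric] x'_def h_def using False nimp by simp
        show ?thesis
        proof (cases "r < h")
          case True
          then have mh: "min (r+1) h = r + 1" by simp
          have "pot n R (x', min (r + 1) h, 0, False) = (M + 1) * (h + 1) * (n - ones n x) + (M + 1) * (h - (r+1))
             + (if r + 1 < h then M else 0) + 2^n" unfolding mh by (simp add: pot_def h_def M_def ox')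
          also have "\<dots> < pot n R (x,r,u,False)"
          proof -
            have "(M + 1) * (h - (r+1)) + (if r + 1 < h then M else 0) < (M + 1) * (h - r)"
            proof -
              obtain k where k: "h = r + 1 + k" using True by (metis less_iff_Suc_add add.commute Suc_eq_plus1 add.assoc)
              show ?thesis unfolding k by (simp add: algebra_simps)
            qed
            then show ?thesis unfolding potx using True by (simp only: if_True)
          qed
          finally show ?thesis using o notzero by auto
        next
          case False
          then have rh': "r = h" using rh by simp
          then have "pot n R (x', min (r + 1) h, 0, False) = pot n R (x,r,u,False)"
            unfolding potx by (simp add: pot_def h_def M_def ox')
          then show ?thesis using o notzero rh' h_def by auto
        qed
      next
        case nthr: False
        then have o: "outc n R x r u False m = (x', r, u + 1, False)"
          unfolding outc_def Let_def y_def[symmetric] x'_def using False nimp by simp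
        have uM: "u + 1 < M" using nthr thr by linarith
        define P where "P = (M + 1) * (h + 1) * (n - ones n x) + (M + 1) * (h - r)"
        have e1: "pot n R (x', r, u + 1, False) = P
           + (if r < h then M - (u+1) else 0) + 2^n" by (simp add: pot_def h_def M_def ox' P_def)
        have e2: "pot n R (x,r,u,False) = P + (if r < h then M - u else 0) + 2^n"
          unfolding potx P_def by simp
        have "pot n R (x', r, u + 1, False) \<le> pot n R (x,r,u,False) \<and>
           (r < h \<longrightarrow> pot n R (x', r, u + 1, False) < pot n R (x,r,u,False))"
          unfolding e1 e2 using uM by (cases "r < h") auto
        then show ?thesis using o notzero h_def by auto
      qed
    qed
  qed
qed

lemma pot_hit: "pot n R (a,b,c,True) = 0" by (simp add: pot_def)

lemma pot_ge: "pot n R (x,r,u,False) \<ge> 2^n" by (simp add: pot_def)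

lemma pmf_mask_half:
  assumes "even n" "n \<ge> 2" "x \<in> bitstrings n"
  shows "pmf (mutation_mask n (n div 2)) x = (1/2)^n"
proof -
  have q: "real (n div 2) / real n = 1/2" using assms(1,2) by (auto elim!: evenE)
  have "pmf (mutation_mask n (n div 2)) x = (\<Prod>i\<in>{..<n}. pmf (bernoulli_pmf (1/2)) (x i))"
    unfolding mutation_mask_def q using assms(3)
    by (intro pmf_Pi') (auto simp: bitstrings_def)
  also have "\<dots> = (\<Prod>i\<in>{..<n}. 1/2)" by (intro prod.cong) auto
  finally show ?thesis by simp
qed

lemma step_bound:
  assumes "even n" "n \<ge> 2" "0 \<le> ln (real n * R)" "sinv n s"
  shows "ennreal (if snd (snd (snd s)) then 0 else 1)
         + (\<integral>\<^sup>+ s'. ennreal (real (pot n R s')) \<partial>sd_step (Trap n) n R s) \<le> ennreal (real (pot n R s))"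
proof -
  obtain x r u hit where s: "s = (x,r,u,hit)" by (metis prod_cases4)
  show ?thesis
  proof (cases hit)
    case True
    have "\<And>m. pot n R (outc n R x r u True m) = 0"
      by (metis outc_hit pot_hit prod_cases4)
    then show ?thesis unfolding s sd_step_eq using True by simp
  next
    case False
    have xb: "x \<in> bitstrings n" and r1: "1 \<le> r" and rh: "r \<le> n div 2"
      using assms(4) by (auto simp: sinv_def s)
    have sinv': "sinv n (x,r,u,False)" using assms(4) s False by simp
    define P where "P = pot n R (x,r,u,False)"
    have P1: "P \<ge> 2^n" unfolding P_def by (rule pot_ge)
    have P0: "P \<ge> 1" using P1 order_trans one_le_power by (metis nat_1_add_1 le_add1 one_le_numeral)
    have I: "(\<integral>\<^sup>+ s'. ennreal (real (pot n R s')) \<partial>sd_step (Trap n) n R s)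
          = (\<integral>\<^sup>+ m. ennreal (real (pot n R (outc n R x r u False m))) \<partial>mutation_mask n r)"
      using False unfolding s sd_step_eq by simp
    show ?thesis
    proof (cases "r < n div 2")
      case True
      have "(\<integral>\<^sup>+ m. ennreal (real (pot n R (outc n R x r u False m))) \<partial>mutation_mask n r)
           \<le> (\<integral>\<^sup>+ m. ennreal (real P - 1) \<partial>mutation_mask n r)"
      proof (intro nn_integral_mono_AE, unfold AE_measure_pmf_iff, intro ballI)
        fix m assume "m \<in> set_pmf (mutation_mask n r)"
        then have "m \<in> bitstrings n" by (rule mask_bits)
        then have "pot n R (outc n R x r u False m) < P"
          using outc_pot[OF assms(1-3) sinv'] True P_def by blast
        then show "ennreal (real (pot n R (outc n R x r u False m))) \<le> ennreal (real P - 1)"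
          by (intro ennreal_leI) linarith
      qed
      also have "\<dots> = ennreal (real P - 1)" by simp
      finally have "1 + (\<integral>\<^sup>+ s'. ennreal (real (pot n R s')) \<partial>sd_step (Trap n) n R s) \<le> 1 + ennreal (real P - 1)"
        unfolding I by (rule add_left_mono)
      also have "\<dots> = ennreal (real P)"
      proof -
        have "ennreal (1 + (real P - 1)) = ennreal 1 + ennreal (real P - 1)"
          by (rule ennreal_plus) (use P0 in auto)
        then show ?thesis by simp
      qed
      finally show ?thesis using s False P_def by simp
    next
      case nlt: False
      then have rh': "r = n div 2" using rh by simp
      have "(\<integral>\<^sup>+ m. ennreal (real (pot n R (outc n R x r u False m))) \<partial>mutation_mask n r)
           \<le> (\<integral>\<^sup>+ m. ennreal (real P) * indicator (UNIV - {x}) m \<partial>mutation_mask n r)"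
      proof (intro nn_integral_mono_AE, unfold AE_measure_pmf_iff, intro ballI)
        fix m assume "m \<in> set_pmf (mutation_mask n r)"
        then have mb: "m \<in> bitstrings n" by (rule mask_bits)
        note op = outc_pot[OF assms(1-3) sinv' mb]
        show "ennreal (real (pot n R (outc n R x r u False m))) \<le> ennreal (real P) * indicator (UNIV - {x}) m"
        proof (cases "m = x")
          case True then show ?thesis using op by simp
        next
          case False then show ?thesis using op P_def by (simp add: ennreal_leI)
        qed
      qed
      also have "\<dots> = ennreal (real P) * emeasure (mutation_mask n r) (UNIV - {x})"
        by (rule nn_integral_cmult_indicator) simp
      also have "emeasure (mutation_mask n r) (UNIV - {x}) = ennreal (1 - (1/2)^n)"
      proof -
        have "measure (mutation_mask n r) (UNIV - {x}) = 1 - measure (mutation_mask n r) {x}"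
          using measure_pmf.prob_compl[of "{x}" "mutation_mask n r"] by simp
        also have "\<dots> = 1 - (1/2)^n" unfolding measure_pmf_single rh'
          using pmf_mask_half[OF assms(1,2) xb] by simp
        finally show ?thesis by (simp add: measure_pmf.emeasure_eq_measure)
      qed
      finally have "1 + (\<integral>\<^sup>+ s'. ennreal (real (pot n R s')) \<partial>sd_step (Trap n) n R s)
          \<le> 1 + ennreal (real P) * ennreal (1 - (1/2)^n)"
        unfolding I by (rule add_left_mono)
      also have "\<dots> = ennreal (1 + real P * (1 - (1/2)^n))"
      proof -
        have q: "0 \<le> 1 - (1/2::real)^n" by (simp add: power_le_one)
        have "ennreal (1 + real P * (1 - (1/2)^n)) = ennreal 1 + ennreal (real P * (1 - (1/2)^n))"
          by (rule ennreal_plus) (use q in auto)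
        also have "ennreal (real P * (1 - (1/2)^n)) = ennreal (real P) * ennreal (1 - (1/2)^n)"
          by (rule ennreal_mult) (use q in auto)
        finally show ?thesis by simp
      qed
      also have "\<dots> \<le> ennreal (real P)"
      proof (intro ennreal_leI)
        have "real P * (1/2)^n \<ge> 2^n * (1/2)^n"
          using P1 by (intro mult_right_mono) (auto simp: of_nat_le_iff[symmetric])
        also have "(2::real)^n * (1/2)^n = 1" by (simp add: power_mult_distrib[symmetric])
        finally show "1 + real P * (1 - (1/2)^n) \<le> real P" by (simp add: algebra_simps)
      qed
      finally show ?thesis using s False P_def by simp
    qed
  qed
qed

lemma inv_dist:
  assumes "even n" "n \<ge> 2"
  shows "s \<in> set_pmf (sd_dist (Trap n) n R t) \<Longrightarrow> sinv n s"
proof (induction t arbitrary: s)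
  case 0
  then obtain x where x: "x \<in> set_pmf (Pi_pmf {..<n} False (\<lambda>_. bernoulli_pmf (1/2)))"
      and s: "s = (x, 1, 0, is_global_max n (Trap n) x)"
    by (auto simp: sd_init_def)
  have xb: "x \<in> bitstrings n" using set_Pi_pmf_subset[of "{..<n}" False] x
    by (fastforce simp: bitstrings_def)
  show ?case using xb not_gm_nz[OF xb] assms(2) by (auto simp: s sinv_def)
next
  case (Suc t)
  then obtain s0 where s0: "s0 \<in> set_pmf (sd_dist (Trap n) n R t)" and s: "s \<in> set_pmf (sd_step (Trap n) n R s0)"
    by auto
  obtain x r u hit where e: "s0 = (x,r,u,hit)" by (metis prod_cases4)
  from s obtain m where m: "m \<in> set_pmf (mutation_mask n r)" and sm: "s = outc n R x r u hit m"
    unfolding e sd_step_eq by auto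
  show ?case unfolding sm by (rule outc_inv[OF assms]) (use Suc.IH[OF s0] e mask_bits[OF m] in auto)
qed

lemma tele_step:
  assumes "even n" "n \<ge> 2" "0 \<le> ln (real n * R)"
  shows "ennreal (measure_pmf.prob (sd_dist (Trap n) n R t) {s. \<not> snd (snd (snd s))})
        + (\<integral>\<^sup>+ s. ennreal (real (pot n R s)) \<partial>sd_dist (Trap n) n R (Suc t))
        \<le> (\<integral>\<^sup>+ s. ennreal (real (pot n R s)) \<partial>sd_dist (Trap n) n R t)"
proof -
  let ?D = "sd_dist (Trap n) n R t"
  have "ennreal (measure_pmf.prob ?D {s. \<not> snd (snd (snd s))}) = emeasure ?D {s. \<not> snd (snd (snd s))}"
    by (simp add: measure_pmf.emeasure_eq_measure)
  also have "\<dots> = (\<integral>\<^sup>+ s. indicator {s. \<not> snd (snd (snd s))} s \<partial>?D)"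
    by simp
  also have "\<dots> = (\<integral>\<^sup>+ s. ennreal (if snd (snd (snd s)) then 0 else 1) \<partial>?D)"
    by (intro nn_integral_cong) (auto simp: indicator_def)
  finally have e1: "ennreal (measure_pmf.prob ?D {s. \<not> snd (snd (snd s))}) = \<dots>" .
  have e2: "(\<integral>\<^sup>+ s. ennreal (real (pot n R s)) \<partial>sd_dist (Trap n) n R (Suc t))
      = (\<integral>\<^sup>+ s. (\<integral>\<^sup>+ s'. ennreal (real (pot n R s')) \<partial>sd_step (Trap n) n R s) \<partial>?D)"
    by simp
  have "(\<integral>\<^sup>+ s. ennreal (if snd (snd (snd s)) then 0 else 1) \<partial>?D)
        + (\<integral>\<^sup>+ s. (\<integral>\<^sup>+ s'. ennreal (real (pot n R s')) \<partial>sd_step (Trap n) n R s) \<partial>?D)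
      = (\<integral>\<^sup>+ s. ennreal (if snd (snd (snd s)) then 0 else 1)
           + (\<integral>\<^sup>+ s'. ennreal (real (pot n R s')) \<partial>sd_step (Trap n) n R s) \<partial>?D)"
    by (rule nn_integral_add[symmetric]) auto
  also have "\<dots> \<le> (\<integral>\<^sup>+ s. ennreal (real (pot n R s)) \<partial>?D)"
  proof (intro nn_integral_mono_AE, unfold AE_measure_pmf_iff, intro ballI)
    fix s assume "s \<in> set_pmf ?D"
    then have "sinv n s" by (rule inv_dist[OF assms(1,2)])
    then show "ennreal (if snd (snd (snd s)) then 0 else 1)
           + (\<integral>\<^sup>+ s'. ennreal (real (pot n R s')) \<partial>sd_step (Trap n) n R s) \<le> ennreal (real (pot n R s))"
      by (rule step_bound[OF assms])
  qed
  finally show ?thesis unfolding e1 e2 .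
qed

lemma tele_sum:
  assumes "even n" "n \<ge> 2" "0 \<le> ln (real n * R)"
  shows "(\<Sum>t<T. ennreal (measure_pmf.prob (sd_dist (Trap n) n R t) {s. \<not> snd (snd (snd s))}))
        + (\<integral>\<^sup>+ s. ennreal (real (pot n R s)) \<partial>sd_dist (Trap n) n R T)
        \<le> (\<integral>\<^sup>+ s. ennreal (real (pot n R s)) \<partial>sd_dist (Trap n) n R 0)"
proof (induction T)
  case 0 then show ?case by simp
next
  case (Suc T)
  have "(\<Sum>t<Suc T. ennreal (measure_pmf.prob (sd_dist (Trap n) n R t) {s. \<not> snd (snd (snd s))}))
        + (\<integral>\<^sup>+ s. ennreal (real (pot n R s)) \<partial>sd_dist (Trap n) n R (Suc T))
      = (\<Sum>t<T. ennreal (measure_pmf.prob (sd_dist (Trap n) n R t) {s. \<not> snd (snd (snd s))}))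
        + (ennreal (measure_pmf.prob (sd_dist (Trap n) n R T) {s. \<not> snd (snd (snd s))})
        + (\<integral>\<^sup>+ s. ennreal (real (pot n R s)) \<partial>sd_dist (Trap n) n R (Suc T)))"
    by (simp add: add.assoc)
  also have "\<dots> \<le> (\<Sum>t<T. ennreal (measure_pmf.prob (sd_dist (Trap n) n R t) {s. \<not> snd (snd (snd s))}))
        + (\<integral>\<^sup>+ s. ennreal (real (pot n R s)) \<partial>sd_dist (Trap n) n R T)"
    by (intro add_left_mono tele_step[OF assms])
  finally show ?case using Suc.IH by (rule order_trans)
qed

lemma pot_le: "pot n R s \<le> (Mc n R + 1) * (n div 2 + 1) * (n + 1) + 2^n"
proof -
  obtain x r u hit where e: "s = (x,r,u,hit)" by (metis prod_cases4)
  define M where "M = Mc n R"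
  define h where "h = n div 2"
  have "(M + 1) * (h + 1) * (n - ones n x) \<le> (M + 1) * (h + 1) * n" by (intro mult_le_mono2) simp
  moreover have "(M + 1) * (h - r) \<le> (M + 1) * h" by (intro mult_le_mono2) simp
  moreover have "(if r < h then M - u else 0) \<le> M + 1" by auto
  moreover have "(M + 1) * (h + 1) * (n + 1) = (M + 1) * (h + 1) * n + (M + 1) * h + (M + 1)"
    by (simp add: algebra_simps)
  ultimately have bnd: "(M + 1) * (h + 1) * (n - ones n x) + (M + 1) * (h - r) + (if r < h then M - u else 0) + 2^n
     \<le> (M + 1) * (h + 1) * (n + 1) + 2^n" by linarith
  have pe: "pot n R s = (if hit then 0 else (M + 1) * (h + 1) * (n - ones n x) + (M + 1) * (h - r) + (if r < h then M - u else 0) + 2^n)"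
    unfolding e pot_def M_def h_def by simp
  show ?thesis unfolding M_def[symmetric] h_def[symmetric] pe
    by (cases hit) (simp, simp only: if_False bnd)
qed

lemma runtime_le:
  assumes "even n" "n \<ge> 2" "0 \<le> ln (real n * R)"
  shows "sd_expected_runtime (Trap n) n R \<le> ennreal (real ((Mc n R + 1) * (n div 2 + 1) * (n + 1) + 2^n))"
proof -
  let ?B = "ennreal (real ((Mc n R + 1) * (n div 2 + 1) * (n + 1) + 2^n))"
  have G0: "(\<integral>\<^sup>+ s. ennreal (real (pot n R s)) \<partial>sd_dist (Trap n) n R 0) \<le> ?B"
  proof -
    have "(\<integral>\<^sup>+ s. ennreal (real (pot n R s)) \<partial>sd_dist (Trap n) n R 0) \<le> (\<integral>\<^sup>+ s. ?B \<partial>sd_dist (Trap n) n R 0)"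
      by (intro nn_integral_mono ennreal_leI) (simp only: of_nat_le_iff pot_le)
    also have "\<dots> = ?B" by simp
    finally show ?thesis .
  qed
  show ?thesis unfolding sd_expected_runtime_def
  proof (rule suminf_le_const[OF summableI])
    fix T
    have "(\<Sum>t<T. ennreal (measure_pmf.prob (sd_dist (Trap n) n R t) {s. \<not> snd (snd (snd s))}))
        \<le> (\<Sum>t<T. ennreal (measure_pmf.prob (sd_dist (Trap n) n R t) {s. \<not> snd (snd (snd s))}))
        + (\<integral>\<^sup>+ s. ennreal (real (pot n R s)) \<partial>sd_dist (Trap n) n R T)" by simp
    also have "\<dots> \<le> ?B" using tele_sum[OF assms] G0 by (rule order_trans)
    finally show "(\<Sum>t<T. ennreal (measure_pmf.prob (sd_dist (Trap n) n R t) {s. \<not> snd (snd (snd s))})) \<le> ?B" .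
  qed
qed

lemma final_bound:
  fixes c R :: real
  assumes "c > 0" "n \<ge> 3" "even n" "(real n + 1)^2 * 2.335^n \<le> 2.34^n"
    "real n + 1 \<le> R" "R \<le> real n powr c"
  shows "real ((Mc n R + 1) * (n div 2 + 1) * (n + 1) + 2^n) \<le> (2*c+6) * 2.34^n * ln (real n)"
proof -
  define h where "h = n div 2"
  have n2: "n = 2 * h" using assms(3) by (auto simp: h_def elim!: evenE)
  define L where "L = ln (real n * R)"
  define E :: real where "E = (2 * exp 1) ^ h"
  have npos: "real n \<ge> 3" using assms(2) by simp
  have ln1: "ln (real n) \<ge> 1"
  proof -
    have "exp 1 \<le> real n" using exp_le npos by linarith
    then show ?thesis using ln_exp[of 1] by (metis exp_gt_zero ln_le_cancel_iff order_less_le_trans)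
  qed
  have nR1: "real n * R \<ge> 1" using mult_mono[of 1 "real n" 1 R] npos assms(5) by simp
  have L0: "L \<ge> 0" unfolding L_def using nR1 by simp
  have Lb: "L \<le> (1 + c) * ln (real n)"
  proof -
    have "real n * R \<le> real n * real n powr c" using assms(6) npos by simp
    also have "\<dots> = real n powr (1 + c)" using npos by (simp add: powr_add)
    finally have "L \<le> ln (real n powr (1 + c))" unfolding L_def using nR1 npos
      by (subst ln_le_cancel_iff) auto
    also have "\<dots> = (1 + c) * ln (real n)" using npos by (simp add: ln_powr)
    finally show ?thesis .
  qed
  have E1: "E \<ge> 1" unfolding E_def using exp_ge_add_one_self[of 1] by (intro one_le_power) simp
  have Eb: "E \<le> 2.335^n"
  proof -
    have "2 * exp 1 \<le> (2.335::real)^2" using e_less_272 by (simp add: power2_eq_square)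
    then have "E \<le> ((2.335::real)^2)^h" unfolding E_def by (intro power_mono) auto
    also have "\<dots> = 2.335^n" by (simp add: n2 power_mult)
    finally show ?thesis .
  qed
  have M: "real (Mc n R) \<le> 2 * E * L + 2"
  proof -
    have "0 \<le> 2 * E * L" using E1 L0 by simp
    then show ?thesis unfolding Mc_def E_def L_def h_def by linarith
  qed
  have M1: "real (Mc n R + 1) \<le> (2*c+5) * E * ln (real n)"
  proof -
    have "real (Mc n R + 1) \<le> 2 * E * ((1 + c) * ln (real n)) + 3"
      using M Lb E1 by (simp, smt (verit) mult_left_mono)
    also have "\<dots> \<le> 2 * E * ((1 + c) * ln (real n)) + 3 * (E * ln (real n))"
    proof -
      have "1 * 1 \<le> E * ln (real n)" using E1 ln1 by (intro mult_mono) auto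
      then show ?thesis by simp
    qed
    also have "\<dots> = (2*c+5) * E * ln (real n)" by (simp add: algebra_simps)
    finally show ?thesis .
  qed
  have HN: "real ((h + 1) * (n + 1)) \<le> (real n + 1)^2"
    unfolding n2 by (simp add: power2_eq_square algebra_simps)
  have "real ((Mc n R + 1) * (n div 2 + 1) * (n + 1)) = real (Mc n R + 1) * real ((h + 1) * (n + 1))"
    unfolding h_def of_nat_mult by (simp only: mult.assoc)
  also have "\<dots> \<le> ((2*c+5) * E * ln (real n)) * (real n + 1)^2"
    using M1 HN by (intro mult_mono) auto
  also have "\<dots> \<le> ((2*c+5) * 2.335^n * ln (real n)) * (real n + 1)^2"
    using Eb assms(1) ln1 by (intro mult_right_mono) auto
  also have "\<dots> = (2*c+5) * ln (real n) * ((real n + 1)^2 * 2.335^n)" by (simp add: algebra_simps)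
  also have "\<dots> \<le> (2*c+5) * ln (real n) * 2.34^n"
    using assms(1,4) ln1 by (intro mult_left_mono) auto
  finally have t1: "real ((Mc n R + 1) * (n div 2 + 1) * (n + 1)) \<le> (2*c+5) * 2.34^n * ln (real n)"
    by (simp add: algebra_simps)
  have "(2::real)^n \<le> 2.34^n" by (intro power_mono) auto
  also have "\<dots> \<le> 2.34^n * ln (real n)" using ln1 by simp
  finally have t2: "(2::real)^n \<le> 2.34^n * ln (real n)" .
  show ?thesis using t1 t2 by (simp add: algebra_simps)
qed

theorem mainTheorem7:
  fixes c :: real
  assumes "c > 0"
  shows "\<exists>C N. \<forall>n \<ge> N. \<forall>R :: real. even n \<and> real n + 1 \<le> R \<and> R \<le> real n powr c \<longrightarrow>
           sd_expected_runtime (Trap n) n R \<le> ennreal (C * 2.34 ^ n * ln (real n))"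
proof -
  obtain N0 where N0: "\<And>n. n \<ge> N0 \<Longrightarrow> (real n + 1)^2 * 2.335 ^ n \<le> 2.34 ^ n"
    using eventually_main unfolding eventually_sequentially by blast
  show ?thesis
  proof (intro exI allI impI)
    fix n :: nat and R :: real
    assume n: "max N0 3 \<le> n" and H: "even n \<and> real n + 1 \<le> R \<and> R \<le> real n powr c"
    have n3: "n \<ge> 3" using n by simp
    have "real n * R \<ge> 1" using mult_mono[of 1 "real n" 1 R] n3 H by simp
    then have L0: "0 \<le> ln (real n * R)" by simp
    have "sd_expected_runtime (Trap n) n R \<le> ennreal (real ((Mc n R + 1) * (n div 2 + 1) * (n + 1) + 2^n))"
      by (rule runtime_le) (use H n3 L0 in auto)
    also have "\<dots> \<le> ennreal ((2*c+6) * 2.34^n * ln (real n))"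
      by (intro ennreal_leI final_bound) (use assms n3 N0 n H in auto)
    finally show "sd_expected_runtime (Trap n) n R \<le> ennreal ((2*c+6) * 2.34^n * ln (real n))" .
  qed
qed

end
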